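(* Let $\Sigma=(\mathbb{N}_0,X,U,\mathscr{U},\phi)$ be a control system as in the standing setup and let $Q\subset X$ be a control set. If $\mathrm{EIM}_k(Q)\cap\operatorname{Int}(Q)\ne\emptyset$ for some $k\in\mathbb N$, then $\mathrm{EIM}_k(Q)=Q$.
   Context: Standing setup: $(X,d)$ is a metric space, $U$ is a compact metric space, and $F:X\times U\to X$ is a map such that $F_u:=F(\cdot,u)$ is continuous for every $u\in U$. Let $\mathscr U=U^{\mathbb N_0}$ with the product topology. For $\omega=(\omega_0,\omega_1,\dots)\in\mathscr U$, $x\in X$, set $\phi(0,x,\omega)=x$ and $\phi(k,x,\omega)=F_{\omega_{k-1}}\circ\cdots\circ F_{\omega_0}(x)$ for $k\ge1$. It is assumed that $\phi:\mathbb N_0\times X\times\mathscr U\to X$ is continuous. Notation: $\mathbb N=\{1,2,\dots\}$; $B(x,\delta)$ is the open ball; $d(y,Q)=\inf_{q\in Q}d(y,q)$; $\operatorname{Int}(Q)$ is the interior of $Q$ in $X$. Control set: $D\subset X$ is a control set if (i) for every $x\in D$ there is $\omega\in\mathscr U$ with $\phi(k,x,\omega)\in D$ for all $k\in\mathbb N_0$; (ii) for every $x\in D$, $D\subset\operatorname{cl}\mathcal O^+(x)$, where $\mathcal O^+(x)=\{\phi(m,x,\omega):m\in\mathbb N_0,\omega\in\mathscr U\}$; (iii) $D$ is maximal with (i) and (ii). For $k\in\mathbb N$: $\mathrm{EIM}_k(Q)$ is the set of $x\in Q$ for which there exist $\delta>0$ and $\omega\in\mathscr U$ such that $\frac1n\sum_{i=0}^{n-1}d(\phi(i,y,\omega),Q)<\frac1k$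 for all $n\in\mathbb N$ and all $y\in B(x,\delta)\cap Q$. *)

theory Defs
  imports "HOL-Analysis.Analysis"
begin

text \<open>Trajectory: phi F k x w = F_{w (k-1)} o ... o F_{w 0} (x).
  The control space is the type nat => 'u with its product topology.\<close>
primrec phi :: "('x \<Rightarrow> 'u \<Rightarrow> 'x) \<Rightarrow> nat \<Rightarrow> 'x \<Rightarrow> (nat \<Rightarrow> 'u) \<Rightarrow> 'x" where
  "phi F 0 x w = x"
| "phi F (Suc k) x w = F (phi F k x w) (w k)"

definition orbit_plus :: "('x \<Rightarrow> 'u \<Rightarrow> 'x) \<Rightarrow> 'x \<Rightarrow> 'x set" where
  "orbit_plus F x = {phi F m x w | m w. True}"

definition ctrl_pre :: "('x::topological_space \<Rightarrow> 'u \<Rightarrow> 'x) \<Rightarrow> 'x set \<Rightarrow> bool" where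
  "ctrl_pre F D \<longleftrightarrow>
     (\<forall>x\<in>D. \<exists>w. \<forall>k. phi F k x w \<in> D) \<and>
     (\<forall>x\<in>D. D \<subseteq> closure (orbit_plus F x))"

definition control_set :: "('x::topological_space \<Rightarrow> 'u \<Rightarrow> 'x) \<Rightarrow> 'x set \<Rightarrow> bool" where
  "control_set F D \<longleftrightarrow> ctrl_pre F D \<and> (\<forall>D'. D \<subseteq> D' \<and> ctrl_pre F D' \<longrightarrow> D' = D)"

definition EIM :: "('x::metric_space \<Rightarrow> 'u \<Rightarrow> 'x) \<Rightarrow> nat \<Rightarrow> 'x set \<Rightarrow> 'x set" where
  "EIM F k Q = {x \<in> Q. \<exists>\<delta>>0. \<exists>w. \<forall>n\<ge>1. \<forall>y \<in> ball x \<delta> \<inter> Q.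
      (\<Sum>i<n. infdist (phi F i y w) Q) / real n < 1 / real k}"

end

theory Submission
  imports Defs
begin

lemma phi_shift: "phi F j (phi F i x v) (\<lambda>t. v (t+i)) = phi F (i+j) x v"
  by (induction j) (auto simp: add.commute)

lemma phi_prefix: "(\<forall>t<i. v t = w t) \<Longrightarrow> phi F i x v = phi F i x w"
  by (induction i) auto

lemma phi_cont:
  assumes "\<And>u. continuous_on UNIV (\<lambda>x. F x u)"
  shows "continuous_on UNIV (\<lambda>x. phi F m x w)"
proof (induction m)
  case 0 then show ?case by (simp add: continuous_on_id)
next
  case (Suc m)
  have "continuous_on UNIV ((\<lambda>x. F x (w m)) \<circ> (\<lambda>x. phi F m x w))"
    by (rule continuous_on_compose[OF Suc]) (use assms continuous_on_subset in blast)
  then show ?case by (simp add: o_def)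
qed

lemma orbit_trans: "p \<in> orbit_plus F x \<Longrightarrow> orbit_plus F p \<subseteq> orbit_plus F x"
proof
  fix q assume "p \<in> orbit_plus F x" "q \<in> orbit_plus F p"
  then obtain i v j w where p: "p = phi F i x v" and q: "q = phi F j p w"
    unfolding orbit_plus_def by blast
  define u where "u = (\<lambda>t. if t < i then v t else w (t - i))"
  have "phi F i x u = p" using p by (metis phi_prefix u_def)
  moreover have "(\<lambda>t. u (t+i)) = w" by (auto simp: u_def)
  ultimately have "q = phi F (i+j) x u" using q phi_shift[of F j i x u] by simp
  then show "q \<in> orbit_plus F x" unfolding orbit_plus_def by blast
qed

lemma orbit_self: "x \<in> orbit_plus F x"
proof -
  have "x = phi F 0 x (\<lambda>_. undefined)" by simp
  then show ?thesis unfolding orbit_plus_def by blast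
qed

lemma closure_orbit_trans:
  assumes cF: "\<And>u. continuous_on UNIV (\<lambda>x. F x u)"
    and b: "b \<in> closure (orbit_plus F c)"
  shows "closure (orbit_plus F b) \<subseteq> closure (orbit_plus F c)"
proof -
  have "orbit_plus F b \<subseteq> closure (orbit_plus F c)"
  proof
    fix q assume "q \<in> orbit_plus F b"
    then obtain m w where q: "q = phi F m b w" unfolding orbit_plus_def by blast
    have "(\<lambda>x. phi F m x w) ` closure (orbit_plus F c) \<subseteq> closure (orbit_plus F c)"
    proof (rule image_closure_subset)
      show "continuous_on (closure (orbit_plus F c)) (\<lambda>x. phi F m x w)"
        by (rule continuous_on_subset[OF phi_cont[OF cF]]) simp
      show "(\<lambda>x. phi F m x w) ` orbit_plus F c \<subseteq> closure (orbit_plus F c)"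
      proof
        fix z assume "z \<in> (\<lambda>x. phi F m x w) ` orbit_plus F c"
        then obtain p where p: "p \<in> orbit_plus F c" "z = phi F m p w" by auto
        then have "z \<in> orbit_plus F p" unfolding orbit_plus_def by blast
        then have "z \<in> orbit_plus F c" using orbit_trans[OF p(1)] by blast
        then show "z \<in> closure (orbit_plus F c)" using closure_subset by blast
      qed
    qed (rule closed_closure)
    then show "q \<in> closure (orbit_plus F c)" using b q by blast
  qed
  then show ?thesis by (rule closure_minimal) simp
qed

lemma pre1: "ctrl_pre F Q \<Longrightarrow> x \<in> Q \<Longrightarrow> \<exists>w. \<forall>k. phi F k x w \<in> Q"
  unfolding ctrl_pre_def by blast

lemma pre2: "ctrl_pre F Q \<Longrightarrow> x \<in> Q \<Longrightarrow> Q \<subseteq> closure (orbit_plus F x)"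
  unfolding ctrl_pre_def by blast

lemma traj_in_Q:
  assumes cF: "\<And>u. continuous_on UNIV (\<lambda>x. F x u)"
    and cs: "control_set F Q" and y: "y \<in> Q" and z: "phi F m y w \<in> Q" and i: "i \<le> m"
  shows "phi F i y w \<in> Q"
proof -
  define D where "D = Q \<union> {phi F i y w | i. i \<le> m}"
  have pre: "ctrl_pre F Q" using cs unfolding control_set_def by (rule conjunct1)
  obtain w2 where w2: "\<forall>k. phi F k (phi F m y w) w2 \<in> Q"
    using pre1[OF pre z] by blast
  define v where "v = (\<lambda>t. if t < m then w t else w2 (t - m))"
  have v1: "phi F j y v = phi F j y w" if "j \<le> m" for j
    using that by (intro phi_prefix) (auto simp: v_def)
  have v2: "phi F (m+j) y v = phi F j (phi F m y w) w2" for j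
    by (induction j) (simp add: v1, simp add: v_def)
  have vD: "phi F j y v \<in> D" for j
  proof (cases "j \<le> m")
    case True then have "phi F j y v = phi F j y w" using v1 by simp
    then show ?thesis unfolding D_def using True by blast
  next
    case False
    define l where "l = j - m"
    have "j = m + l" using False by (simp add: l_def)
    then have "phi F j y v \<in> Q" using v2 w2 by simp
    then show ?thesis unfolding D_def by blast
  qed
  have c1: "\<forall>x\<in>D. \<exists>w. \<forall>k. phi F k x w \<in> D"
  proof
    fix x assume "x \<in> D"
    then consider "x \<in> Q" | j where "j \<le> m" "x = phi F j y w" unfolding D_def by blast
    then show "\<exists>w. \<forall>k. phi F k x w \<in> D"
    proof cases
      case 1 then obtain u where "\<forall>k. phi F k x u \<in> Q" using pre1[OF pre] by blast
      then have "\<forall>k. phi F k x u \<in> D" unfolding D_def by blast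
      then show ?thesis by blast
    next
      case 2
      then have "x = phi F j y v" using v1[of j] by simp
      then have "\<forall>k. phi F k x (\<lambda>t. v (t+j)) \<in> D" using vD phi_shift[of F _ j y v] by simp
      then show ?thesis by blast
    qed
  qed
  let ?z = "phi F m y w"
  have zD: "D \<subseteq> closure (orbit_plus F ?z)"
  proof
    fix p assume "p \<in> D"
    then consider "p \<in> Q" | j where "j \<le> m" "p = phi F j y w" unfolding D_def by blast
    then show "p \<in> closure (orbit_plus F ?z)"
    proof cases
      case 1 then show ?thesis using pre2[OF pre z] by blast
    next
      case 2
      have "y \<in> closure (orbit_plus F ?z)" using pre2[OF pre z] y by blast
      then have "closure (orbit_plus F y) \<subseteq> closure (orbit_plus F ?z)"
        by (rule closure_orbit_trans[OF cF])
      moreover have "p \<in> orbit_plus F y" using 2 unfolding orbit_plus_def by blast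
      ultimately show ?thesis using closure_subset by blast
    qed
  qed
  have c2: "\<forall>p\<in>D. D \<subseteq> closure (orbit_plus F p)"
  proof
    fix p assume "p \<in> D"
    then consider "p \<in> Q" | j where "j \<le> m" "p = phi F j y w" unfolding D_def by blast
    then have "?z \<in> closure (orbit_plus F p)"
    proof cases
      case 1 then show ?thesis using pre2[OF pre] z by blast
    next
      case 2
      then have "?z = phi F (m - j) p (\<lambda>t. w (t+j))" using phi_shift[of F "m-j" j y w] by simp
      then have "?z \<in> orbit_plus F p" unfolding orbit_plus_def by blast
      then show ?thesis using closure_subset by blast
    qed
    then have "closure (orbit_plus F ?z) \<subseteq> closure (orbit_plus F p)"
      by (rule closure_orbit_trans[OF cF])
    then show "D \<subseteq> closure (orbit_plus F p)"
      using zD by (rule order_trans[rotated])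
  qed
  have "ctrl_pre F D" using c1 c2 unfolding ctrl_pre_def by blast
  moreover have "Q \<subseteq> D" unfolding D_def by blast
  ultimately have "D = Q" using cs unfolding control_set_def by blast
  moreover have "phi F i y w \<in> D" unfolding D_def using i by blast
  ultimately show ?thesis by simp
qed

lemma sum_split: "(\<Sum>i<m+(j::nat). f i) = (\<Sum>i<m. f i) + (\<Sum>i<j. f (m+i)::real)"
  by (induction j) (auto simp: add.commute)

theorem mainTheorem5:
  fixes F :: "'x::metric_space \<Rightarrow> 'u::metric_space \<Rightarrow> 'x"
    and Q :: "'x set" and k :: nat
  assumes "compact (UNIV :: 'u set)"
    and cF: "\<And>u. continuous_on UNIV (\<lambda>x. F x u)"
    and "continuous_on UNIV (\<lambda>(m, x, w). phi F m x w)"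
    and cs: "control_set F Q"
    and k: "k \<ge> 1"
    and ne: "EIM F k Q \<inter> interior Q \<noteq> {}"
  shows "EIM F k Q = Q"
proof
  show "EIM F k Q \<subseteq> Q" unfolding EIM_def by auto
  show "Q \<subseteq> EIM F k Q"
  proof
    fix x assume xQ: "x \<in> Q"
    have pre: "ctrl_pre F Q" using cs unfolding control_set_def by (rule conjunct1)
    obtain x0 where x0: "x0 \<in> EIM F k Q" "x0 \<in> interior Q" using ne by blast
    then obtain d0 w0 where d0: "d0 > 0" and
      w0: "\<And>n y. n \<ge> 1 \<Longrightarrow> y \<in> ball x0 d0 \<inter> Q \<Longrightarrow>
          (\<Sum>i<n. infdist (phi F i y w0) Q) / real n < 1 / real k"
      unfolding EIM_def by blast
    obtain r0 where r0: "r0 > 0" "ball x0 r0 \<subseteq> Q"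
      using x0(2) by (meson mem_interior)
    define r where "r = min r0 d0"
    have r: "r > 0" "ball x0 r \<subseteq> Q" "ball x0 r \<subseteq> ball x0 d0"
      using r0 d0 by (auto simp: r_def)
    have "x0 \<in> closure (orbit_plus F x)" using pre x0 xQ
      unfolding ctrl_pre_def EIM_def by blast
    then obtain p where p: "p \<in> orbit_plus F x" "dist p x0 < r"
      using r(1) closure_approachable by metis
    then obtain m w where pm: "p = phi F m x w" unfolding orbit_plus_def by blast
    have "\<exists>d>0. \<forall>y. dist y x < d \<longrightarrow> dist (phi F m y w) (phi F m x w) < r - dist p x0"
      using phi_cont[OF cF, where m=m and w=w] p(2) unfolding continuous_on_iff by auto
    then obtain d where d: "d > 0"
      "\<And>y. dist y x < d \<Longrightarrow> dist (phi F m y w) p < r - dist p x0" using pm by auto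
    define v where "v = (\<lambda>t. if t < m then w t else w0 (t - m))"
    have "\<forall>n\<ge>1. \<forall>y \<in> ball x d \<inter> Q.
      (\<Sum>i<n. infdist (phi F i y v) Q) / real n < 1 / real k"
    proof (intro allI impI ballI)
      fix n :: nat and y assume n: "n \<ge> 1" and y: "y \<in> ball x d \<inter> Q"
      let ?y' = "phi F m y w"
      have "dist ?y' x0 < r" using d(2)[of y] y dist_triangle[of ?y' x0 p]
        by (auto simp: dist_commute)
      then have y'1: "?y' \<in> Q" and y'2: "?y' \<in> ball x0 d0" using r
        by (auto simp: dist_commute)
      have v1: "phi F j y v = phi F j y w" if "j \<le> m" for j
        using that by (intro phi_prefix) (auto simp: v_def)
      have v2: "phi F (m+j) y v = phi F j ?y' w0" for j
        by (induction j) (simp add: v1, simp add: v_def)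
      have z: "infdist (phi F i y v) Q = 0" if "i < m" for i
        using v1[of i] that traj_in_Q[OF cF cs _ y'1, of i] y by (simp add: infdist_zero)
      have kpos: "1 / real k > 0" using k by simp
      show "(\<Sum>i<n. infdist (phi F i y v) Q) / real n < 1 / real k"
      proof (cases "n \<le> m")
        case True
        then have "(\<Sum>i<n. infdist (phi F i y v) Q) = 0" using z by (intro sum.neutral) auto
        then show ?thesis using kpos by simp
      next
        case False
        define j where "j = n - m"
        have j: "n = m + j" "j \<ge> 1" using False by (auto simp: j_def)
        have s0: "(\<Sum>i<m. infdist (phi F i y v) Q) = 0" using z by (intro sum.neutral) auto
        have sum: "(\<Sum>i<n. infdist (phi F i y v) Q) = (\<Sum>i<j. infdist (phi F i ?y' w0) Q)"
          using j(1) sum_split[of "\<lambda>i. infdist (phi F i y v) Q" m j] s0 v2 by simp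
        have "(\<Sum>i<j. infdist (phi F i ?y' w0) Q) < real j / real k"
          using w0[OF j(2), of ?y'] y'1 y'2 j(2) by (simp add: divide_simps split: if_splits)
        also have "\<dots> \<le> real n / real k" using j k by (simp add: divide_right_mono)
        finally show ?thesis using sum n by (simp add: divide_simps)
      qed
    qed
    then show "x \<in> EIM F k Q" unfolding EIM_def using xQ d(1) by (auto simp: dist_commute)
  qed
qed

end
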